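(* There is an absolute constant $c>0$ such that the following holds. Let $\delta>0$, let $q$ and $N$ be positive integers, and let $T$ be an $N$-vertex tournament that is $\delta$-far from transitive. Then any coloring of the edges of $T$ with $q$ colors contains a directed path with at least $c\delta^2N/q^3$ vertices whose edges receive at most three colors. Furthermore, there are distinct vertices $v_1,\dots,v_L$ with $L\geq c\delta^2N/q^3$ such that $v_j\to v_{j+1}$ for all $1\leq j<L$, $v_{j+2}\to v_j$ for all $1\leq j\leq L-2$, and the colors of the edges $v_jv_{j+1}$ and of the edges $v_jv_{j+2}$ are periodic in $j$ with period $3$ (i.e. the color of $v_jv_{j+1}$ equals that of $v_{j+3}v_{j+4}$ and the color of $v_jv_{j+2}$ equals that of $v_{j+3}v_{j+5}$ whenever these edges exist).
   Context: A tournament is an orientation of a complete graph. An $N$-vertex tournament is $\delta$-close to transitive if it can be made transitive (acyclic) by reversing the orientation of at most $\delta N^2$ edges, and $\delta$-far from transitive otherwise. A directed path is a sequence of distinct vertices $v_1,\dots,v_L$ with $v_j\to v_{j+1}$ for all $j<L$. *)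

theory Defs
  imports Main Complex_Main
begin

text \<open>A tournament on the finite vertex set V, given by its arc relation T
  (T x y means the edge between x and y is oriented x \<rightarrow> y).\<close>
definition tournament :: "'a set \<Rightarrow> ('a \<Rightarrow> 'a \<Rightarrow> bool) \<Rightarrow> bool" where
  "tournament V T \<longleftrightarrow> finite V \<and>
     (\<forall>x y. T x y \<longrightarrow> x \<in> V \<and> y \<in> V) \<and>
     (\<forall>x\<in>V. \<not> T x x) \<and>
     (\<forall>x\<in>V. \<forall>y\<in>V. x \<noteq> y \<longrightarrow> (T x y \<longleftrightarrow> \<not> T y x))"

definition arcs :: "'a set \<Rightarrow> ('a \<Rightarrow> 'a \<Rightarrow> bool) \<Rightarrow> ('a \<times> 'a) set" where
  "arcs V T = {(x, y). x \<in> V \<and> y \<in> V \<and> T x y}"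

definition reverse_arcs :: "('a \<Rightarrow> 'a \<Rightarrow> bool) \<Rightarrow> ('a \<times> 'a) set \<Rightarrow> 'a \<Rightarrow> 'a \<Rightarrow> bool" where
  "reverse_arcs T F x y \<longleftrightarrow> (T x y \<and> (x, y) \<notin> F) \<or> (T y x \<and> (y, x) \<in> F)"

definition delta_close_transitive :: "real \<Rightarrow> 'a set \<Rightarrow> ('a \<Rightarrow> 'a \<Rightarrow> bool) \<Rightarrow> bool" where
  "delta_close_transitive \<delta> V T \<longleftrightarrow>
     (\<exists>F. F \<subseteq> arcs V T \<and> real (card F) \<le> \<delta> * (real (card V))^2 \<and>
          acyclic (arcs V (reverse_arcs T F)))"

definition delta_far_transitive :: "real \<Rightarrow> 'a set \<Rightarrow> ('a \<Rightarrow> 'a \<Rightarrow> bool) \<Rightarrow> bool" where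
  "delta_far_transitive \<delta> V T \<longleftrightarrow> \<not> delta_close_transitive \<delta> V T"

definition directed_path :: "'a set \<Rightarrow> ('a \<Rightarrow> 'a \<Rightarrow> bool) \<Rightarrow> 'a list \<Rightarrow> bool" where
  "directed_path V T vs \<longleftrightarrow> distinct vs \<and> set vs \<subseteq> V \<and>
     (\<forall>j. j + 1 < length vs \<longrightarrow> T (vs ! j) (vs ! (j + 1)))"

end

theory Submission
  imports Defs
begin

lemma abel:
  fixes x y :: "nat \<Rightarrow> int"
  shows "(\<Sum>i<Suc k. x i * y i) = (\<Sum>m<k. (\<Sum>i\<le>m. x i) * (y m - y (Suc m))) + (\<Sum>i\<le>k. x i) * y k"
proof (induction k)
  case 0 then show ?case by simp
next
  case (Suc k)
  show ?case using Suc by (simp add: algebra_simps)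
qed

lemma sum_id_int: "2 * (\<Sum>i<n. int i) = int n * (int n - 1)"
  by (induction n) (auto simp: algebra_simps)

lemma sum_sq_int: "6 * (\<Sum>i<n. (int i)^2) = (int n - 1) * int n * (2 * int n - 1)"
  by (induction n) (auto simp: algebra_simps power2_eq_square)

lemma count_range: "i < j \<Longrightarrow> j \<le> n \<Longrightarrow> (\<Sum>m<n. (if i \<le> m \<and> m < j then 1 else 0::int)) = int j - int i"
proof -
  assume "i < j" "j \<le> n"
  have "(\<Sum>m<n. (if i \<le> m \<and> m < j then 1 else 0::int)) = int (card ({..<n} \<inter> {m. i \<le> m \<and> m < j}))"
    by (simp add: sum.If_cases)
  also have "{..<n} \<inter> {m. i \<le> m \<and> m < j} = {i..<j}" using \<open>j \<le> n\<close> by auto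
  finally show ?thesis using \<open>i < j\<close> by simp
qed

lemma count_short: "(\<Sum>j<n. (if i < j \<and> j < i + L then 1 else 0::int)) \<le> int L"
proof -
  have "(\<Sum>j<n. (if i < j \<and> j < i + L then 1 else 0::int)) = int (card ({..<n} \<inter> {j. i < j \<and> j < i + L}))"
    by (simp add: sum.If_cases)
  also have "card ({..<n} \<inter> {j. i < j \<and> j < i + L}) \<le> card {i<..<i+L}"
    by (rule card_mono) auto
  finally show ?thesis by simp
qed


lemma final_arith:
  fixes W b :: int and n :: nat
  assumes n: "n > 0" and Wb: "W \<ge> b" and b0: "b \<ge> 0"
    and WL: "\<And>L::nat. W \<ge> int L * b - int n * (int L)^2"
  shows "b^2 \<le> 8 * int n * W"
proof (cases "b < 2 * int n")
  case True
  have "b^2 = b * b" by (simp add: power2_eq_square)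
  also have "\<dots> \<le> (2 * int n) * b" using True b0 by (intro mult_right_mono) auto
  also have "\<dots> \<le> (2 * int n) * W" using Wb n by (intro mult_left_mono) auto
  also have "\<dots> \<le> 8 * int n * W" using Wb b0 by (intro mult_right_mono) auto
  finally show ?thesis .
next
  case False
  define m where "m = 2 * int n"
  define L where "L = b div m"
  have n': "m > 0" using n by (simp add: m_def)
  have eq: "b = m * L + b mod m" unfolding L_def by simp
  have r0: "b mod m \<ge> 0" and r1: "b mod m < m" using n' by auto
  have L1: "m * L \<le> b" using eq r0 by linarith
  have L2: "b < m * (L + 1)" using eq r1 by (simp add: algebra_simps)
  have Lpos: "L \<ge> 1"
  proof (rule ccontr)
    assume "\<not> L \<ge> 1" hence "L + 1 \<le> 1" by simp
    hence "m * (L + 1) \<le> m * 1" using n' by (intro mult_left_mono) auto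
    thus False using L2 False m_def by simp
  qed
  have "W \<ge> int (nat L) * b - int n * (int (nat L))^2" by (rule WL)
  hence W1: "W \<ge> L * b - int n * L^2" using Lpos by simp
  have "m * L * L \<le> b * L" using L1 Lpos by (intro mult_right_mono) auto
  hence W2: "2 * W \<ge> L * b" using W1 unfolding m_def by (simp add: power2_eq_square algebra_simps)
  have "m * (L + 1) \<le> m * (2 * L)" using Lpos n' by (intro mult_left_mono) auto
  hence b4: "b \<le> 4 * int n * L" using L2 unfolding m_def by (simp add: algebra_simps)
  have "b^2 = b * b" by (simp add: power2_eq_square)
  also have "\<dots> \<le> (4 * int n * L) * b" using b4 b0 by (intro mult_right_mono) auto
  also have "\<dots> = 4 * int n * (L * b)" by simp
  also have "\<dots> \<le> 4 * int n * (2 * W)" using W2 n by (intro mult_left_mono) auto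
  finally show ?thesis by simp
qed


lemma cyc_bound:
  fixes A :: "nat \<Rightarrow> nat \<Rightarrow> int" and n :: nat
  assumes A01: "\<And>i j. i<n \<Longrightarrow> j<n \<Longrightarrow> A i j = 0 \<or> A i j = 1"
  and Adiag: "\<And>i. i<n \<Longrightarrow> A i i = 0"
  and Aanti: "\<And>i j. i<n \<Longrightarrow> j<n \<Longrightarrow> i \<noteq> j \<Longrightarrow> A i j + A j i = 1"
  and mono: "\<And>i j. i \<le> j \<Longrightarrow> j < n \<Longrightarrow> (\<Sum>l<n. A j l) \<le> (\<Sum>l<n. A i l)"
  shows "3 * (\<Sum>i<n. \<Sum>j<n. if i < j then A j i else 0)^2
           \<le> 16 * int n * (\<Sum>i<n. \<Sum>j<n. \<Sum>l<n. A i j * A j l * A l i)"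
proof (cases "n = 0")
  case True then show ?thesis by simp
next
  case False
  hence npos: "n > 0" by simp
  define d where "d i = (\<Sum>l<n. A i l)" for i
  define a where "a i = int (n - Suc i)" for i
  define Cyc where "Cyc = (\<Sum>i<n. \<Sum>j<n. \<Sum>l<n. A i j * A j l * A l i)"
  define Tr where "Tr = (\<Sum>i<n. \<Sum>j<n. \<Sum>l<n. A i j * A j l * A i l)"
  define b where "b = (\<Sum>i<n. \<Sum>j<n. if i < j then A j i else 0)"
  have Age: "\<And>i j. i<n \<Longrightarrow> j<n \<Longrightarrow> A i j \<ge> 0" using A01 by fastforce
  have prod0: "A i j * A j i = 0" if "i<n" "j<n" for i j
  proof (cases "i = j")
    case True thus ?thesis using Adiag that by simp
  next
    case False
    thus ?thesis using Aanti[OF that False] A01[OF that] by auto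
  qed
  have sq: "A i j * A i j = A i j" if "i<n" "j<n" for i j using A01[OF that] by auto
  have colsum: "(\<Sum>j<n. A j i) = int n - 1 - d i" if "i < n" for i
  proof -
    have "(\<Sum>j<n. A j i) = (\<Sum>j<n. 1 - (if j = i then 1 else 0) - A i j)"
    proof (rule sum.cong)
      fix j assume "j \<in> {..<n}"
      thus "A j i = 1 - (if j = i then 1 else 0) - A i j"
        using Aanti[of j i] Adiag[of i] that by (cases "j = i") auto
    qed simp
    also have "\<dots> = int n - 1 - d i" using that by (simp add: sum_subtractf d_def)
    finally show ?thesis .
  qed
  have P2a: "(\<Sum>i<n. \<Sum>j<n. \<Sum>l<n. A i j * A j l) = (\<Sum>j<n. (int n - 1 - d j) * d j)"
  proof -
    have "(\<Sum>i<n. \<Sum>j<n. \<Sum>l<n. A i j * A j l) = (\<Sum>j<n. \<Sum>i<n. \<Sum>l<n. A i j * A j l)"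
      by (rule sum.swap)
    also have "\<dots> = (\<Sum>j<n. (\<Sum>i<n. A i j) * (\<Sum>l<n. A j l))"
      by (simp add: sum_product)
    also have "\<dots> = (\<Sum>j<n. (int n - 1 - d j) * d j)"
      by (rule sum.cong) (auto simp: colsum d_def)
    finally show ?thesis .
  qed
  have P2b: "(\<Sum>i<n. \<Sum>j<n. \<Sum>l<n. A i j * A j l) = Cyc + Tr"
  proof -
    have "(\<Sum>i<n. \<Sum>j<n. \<Sum>l<n. A i j * A j l) = (\<Sum>i<n. \<Sum>j<n. \<Sum>l<n. A i j * A j l * A l i + A i j * A j l * A i l)"
    proof (intro sum.cong refl)
      fix i j l assume "i \<in> {..<n}" "j \<in> {..<n}" "l \<in> {..<n}"
      hence h: "i<n" "j<n" "l<n" by auto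
      show "A i j * A j l = A i j * A j l * A l i + A i j * A j l * A i l"
      proof (cases "l = i")
        case True thus ?thesis using prod0[OF h(1,2)] Adiag[OF h(1)] by simp
      next
        case False
        have "A i j * A j l * A l i + A i j * A j l * A i l = A i j * A j l * (A l i + A i l)"
          by (simp add: algebra_simps)
        thus ?thesis using Aanti[OF h(3) h(1) False] by simp
      qed
    qed
    thus ?thesis by (simp add: sum.distrib Cyc_def Tr_def)
  qed
  have Qa: "(\<Sum>i<n. \<Sum>j<n. \<Sum>l<n. A i j * A i l * (A j l + A l j)) = 2 * Tr"
  proof -
    have "(\<Sum>i<n. \<Sum>j<n. \<Sum>l<n. A i j * A i l * (A j l + A l j)) =
          (\<Sum>i<n. \<Sum>j<n. \<Sum>l<n. A i j * A j l * A i l) + (\<Sum>i<n. \<Sum>j<n. \<Sum>l<n. A i j * A i l * A l j)"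
      by (simp add: sum.distrib algebra_simps)
    also have "(\<Sum>i<n. \<Sum>j<n. \<Sum>l<n. A i j * A i l * A l j) = (\<Sum>i<n. \<Sum>l<n. \<Sum>j<n. A i j * A i l * A l j)"
      by (rule sum.cong[OF refl], rule sum.swap)
    also have "\<dots> = Tr" unfolding Tr_def by (simp add: algebra_simps)
    finally show ?thesis unfolding Tr_def by simp
  qed
  have Qb: "(\<Sum>i<n. \<Sum>j<n. \<Sum>l<n. A i j * A i l * (A j l + A l j)) = (\<Sum>i<n. d i * d i - d i)"
  proof (rule sum.cong[OF refl])
    fix i assume "i \<in> {..<n}" hence hi: "i < n" by simp
    have "(\<Sum>j<n. \<Sum>l<n. A i j * A i l * (A j l + A l j)) =
          (\<Sum>j<n. \<Sum>l<n. A i j * A i l - (if l = j then A i j * A i j else 0))"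
    proof (intro sum.cong refl)
      fix j l assume "j \<in> {..<n}" "l \<in> {..<n}"
      thus "A i j * A i l * (A j l + A l j) = A i j * A i l - (if l = j then A i j * A i j else 0)"
        using Aanti[of j l] Adiag[of j] by (cases "j = l") auto
    qed
    also have "\<dots> = (\<Sum>j<n. \<Sum>l<n. A i j * A i l) - (\<Sum>j<n. A i j * A i j)"
      by (simp add: sum_subtractf)
    also have "(\<Sum>j<n. A i j * A i j) = d i"
      unfolding d_def by (rule sum.cong) (auto simp: sq hi)
    also have "(\<Sum>j<n. \<Sum>l<n. A i j * A i l) = d i * d i"
      by (simp add: d_def sum_product)
    finally show "(\<Sum>j<n. \<Sum>l<n. A i j * A i l * (A j l + A l j)) = d i * d i - d i" .
  qed
  have Cyc2: "2 * Cyc = 2 * (\<Sum>j<n. (int n - 1 - d j) * d j) - (\<Sum>i<n. d i * d i - d i)"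
    using P2a P2b Qa Qb by linarith
  have Sd: "2 * (\<Sum>i<n. d i) = int n * (int n - 1)"
  proof -
    have "(\<Sum>i<n. d i) = (\<Sum>j<n. \<Sum>i<n. A i j)" unfolding d_def by (rule sum.swap)
    also have "\<dots> = (\<Sum>j<n. int n - 1 - d j)" by (rule sum.cong) (auto simp: colsum)
    also have "\<dots> = int n * (int n - 1) - (\<Sum>i<n. d i)" by (simp add: sum_subtractf sum.distrib algebra_simps)
    finally show ?thesis by simp
  qed
  have Sa: "6 * (\<Sum>i<n. (a i)^2) = (int n - 1) * int n * (2 * int n - 1)"
  proof -
    have "(\<Sum>i<n. (a i)^2) = (\<Sum>i<n. (int (n - Suc i))^2)" by (simp add: a_def)
    also have "\<dots> = (\<Sum>i<n. (int i)^2)" by (rule sum.nat_diff_reindex)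
    finally show ?thesis using sum_sq_int by simp
  qed
  define D where "D = (\<Sum>i<n. (a i)^2 - (d i)^2)"
  have CD: "2 * Cyc = 3 * D"
  proof -
    have e1: "(\<Sum>j<n. (int n - 1 - d j) * d j) = (int n - 1) * (\<Sum>j<n. d j) - (\<Sum>j<n. d j * d j)"
    proof -
      have "(\<Sum>j<n. (int n - 1 - d j) * d j) = (\<Sum>j<n. (int n - 1) * d j - d j * d j)"
        by (rule sum.cong) (auto simp: algebra_simps)
      thus ?thesis by (simp add: sum_subtractf sum_distrib_left)
    qed
    have e2: "(\<Sum>i<n. d i * d i - d i) = (\<Sum>j<n. d j * d j) - (\<Sum>j<n. d j)"
      by (simp add: sum_subtractf)
    have e3: "D = (\<Sum>i<n. (a i)^2) - (\<Sum>j<n. d j * d j)"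
      by (simp add: D_def sum_subtractf power2_eq_square)
    have "4 * Cyc = (2 * int n - 1) * (2 * (\<Sum>j<n. d j)) - 6 * (\<Sum>j<n. d j * d j)"
      using Cyc2 e1 e2 by (simp add: algebra_simps)
    also have "\<dots> = (2 * int n - 1) * (int n * (int n - 1)) - 6 * (\<Sum>j<n. d j * d j)"
      by (simp only: Sd)
    also have "(2 * int n - 1) * (int n * (int n - 1)) = (int n - 1) * int n * (2 * int n - 1)"
      by (simp add: algebra_simps)
    also have "\<dots> = 6 * (\<Sum>i<n. (a i)^2)" using Sa by simp
    finally show ?thesis using e3 by simp
  qed
  define e where "e m = (\<Sum>i<n. \<Sum>j<n. if i \<le> m \<and> m < j then A j i else 0)" for m
  have e0: "e m \<ge> 0" for m
    unfolding e_def by (intro sum_nonneg) (auto intro: Age)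
  have arow: "a i = (\<Sum>j<n. if i < j then 1 else 0)" if "i < n" for i
  proof -
    have "(\<Sum>j<n. if i < j then 1 else 0::int) = int (card ({..<n} \<inter> {j. i < j}))"
      by (simp add: sum.If_cases)
    also have "{..<n} \<inter> {j. i < j} = {i<..<n}" by auto
    finally show ?thesis by (simp add: a_def)
  qed
  have xrow: "a i - d i = (\<Sum>j<n. if i < j then A j i else if j < i then - A i j else 0)" if "i < n" for i
  proof -
    have "a i - d i = (\<Sum>j<n. (if i < j then 1 else 0) - A i j)"
      by (simp add: arow[OF that] d_def sum_subtractf)
    also have "\<dots> = (\<Sum>j<n. if i < j then A j i else if j < i then - A i j else 0)"
    proof (rule sum.cong[OF refl])
      fix j assume "j \<in> {..<n}"
      thus "(if i < j then 1 else 0) - A i j = (if i < j then A j i else if j < i then - A i j else 0)"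
        using Aanti[of i j] that Adiag[of i] by (cases "i < j"; cases "j < i") auto
    qed
    finally show ?thesis .
  qed
  have xsum: "(\<Sum>i\<le>m. a i - d i) = e m" if "m < n" for m
  proof -
    have "(\<Sum>i\<le>m. a i - d i) = (\<Sum>i<n. if i \<le> m then a i - d i else 0)"
    proof -
      have "{..<n} \<inter> {i. i \<le> m} = {..m}" using that by auto
      thus ?thesis by (simp add: sum.If_cases)
    qed
    also have "\<dots> = (\<Sum>i<n. \<Sum>j<n. (if i \<le> m \<and> m < j then A j i else 0)
                 + (if i < j \<and> j \<le> m then A j i else 0) - (if i \<le> m \<and> j < i then A i j else 0))"
    proof (rule sum.cong[OF refl])
      fix i assume "i \<in> {..<n}"
      hence hi: "i < n" by simp
      show "(if i \<le> m then a i - d i else 0) = (\<Sum>j<n. (if i \<le> m \<and> m < j then A j i else 0)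
                 + (if i < j \<and> j \<le> m then A j i else 0) - (if i \<le> m \<and> j < i then A i j else 0))"
      proof (cases "i \<le> m")
        case True
        from True have "(if i \<le> m then a i - d i else 0) = a i - d i" by simp
        also have "\<dots> = (\<Sum>j<n. if i < j then A j i else if j < i then - A i j else 0)" by (rule xrow[OF hi])
        also have "\<dots> = (\<Sum>j<n. (if i \<le> m \<and> m < j then A j i else 0)
                 + (if i < j \<and> j \<le> m then A j i else 0) - (if i \<le> m \<and> j < i then A i j else 0))"
          using True by (intro sum.cong refl) auto
        finally show ?thesis .
      next
        case False
        thus ?thesis by (simp, intro sum.neutral) auto
      qed
    qed
    also have "\<dots> = e m + (\<Sum>i<n. \<Sum>j<n. if i < j \<and> j \<le> m then A j i else 0)
                    - (\<Sum>i<n. \<Sum>j<n. if i \<le> m \<and> j < i then A i j else 0)"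
      by (simp add: e_def sum.distrib sum_subtractf)
    also have "(\<Sum>i<n. \<Sum>j<n. if i < j \<and> j \<le> m then A j i else 0)
             = (\<Sum>j<n. \<Sum>i<n. if i < j \<and> j \<le> m then A j i else 0)" by (rule sum.swap)
    also have "\<dots> = (\<Sum>i<n. \<Sum>j<n. if i \<le> m \<and> j < i then A i j else 0)"
      by (intro sum.cong refl) auto
    finally show ?thesis by simp
  qed
  obtain k where nk: "n = Suc k" using npos by (cases n) auto
  define y where "y i = a i + d i" for i
  have ek: "e k = 0" unfolding e_def nk by (intro sum.neutral) auto
  have DW: "D \<ge> (\<Sum>m<n. e m)"
  proof -
    have "D = (\<Sum>i<Suc k. (a i - d i) * y i)"
      unfolding D_def y_def nk by (intro sum.cong refl) (simp add: power2_eq_square algebra_simps)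
    also have "\<dots> = (\<Sum>m<k. (\<Sum>i\<le>m. a i - d i) * (y m - y (Suc m))) + (\<Sum>i\<le>k. a i - d i) * y k"
      by (rule abel)
    also have "\<dots> = (\<Sum>m<k. e m * (y m - y (Suc m)))"
      using xsum nk ek by simp
    also have "\<dots> \<ge> (\<Sum>m<k. e m)"
    proof (rule sum_mono)
      fix m assume "m \<in> {..<k}"
      hence hm: "Suc m < n" using nk by simp
      have "d (Suc m) \<le> d m" unfolding d_def using mono[of m "Suc m"] hm by simp
      moreover have "a m = a (Suc m) + 1" unfolding a_def using hm by simp
      ultimately have "y m - y (Suc m) \<ge> 1" unfolding y_def by simp
      thus "e m \<le> e m * (y m - y (Suc m))" using e0[of m]
        by (metis mult.right_neutral mult_left_mono)
    qed
    finally show ?thesis using ek nk by simp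
  qed
  have Wform: "(\<Sum>m<n. e m) = (\<Sum>i<n. \<Sum>j<n. if i < j then A j i * (int j - int i) else 0)"
  proof -
    have "(\<Sum>m<n. e m) = (\<Sum>i<n. \<Sum>m<n. \<Sum>j<n. if i \<le> m \<and> m < j then A j i else 0)"
      unfolding e_def by (rule sum.swap)
    also have "\<dots> = (\<Sum>i<n. \<Sum>j<n. \<Sum>m<n. if i \<le> m \<and> m < j then A j i else 0)"
      by (intro sum.cong refl sum.swap)
    also have "\<dots> = (\<Sum>i<n. \<Sum>j<n. if i < j then A j i * (int j - int i) else 0)"
    proof (intro sum.cong refl)
      fix i j assume "i \<in> {..<n}" "j \<in> {..<n}"
      hence hj: "j \<le> n" by simp
      have "(\<Sum>m<n. if i \<le> m \<and> m < j then A j i else 0) = A j i * (\<Sum>m<n. if i \<le> m \<and> m < j then 1 else 0)"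
        by (simp add: sum_distrib_left if_distrib cong: if_cong)
      also have "\<dots> = (if i < j then A j i * (int j - int i) else 0)"
      proof (cases "i < j")
        case True thus ?thesis using count_range[OF True hj] by simp
      next
        case False
        hence "(\<Sum>m<n. if i \<le> m \<and> m < j then 1 else 0::int) = 0" by (intro sum.neutral) auto
        thus ?thesis using False by simp
      qed
      finally show "(\<Sum>m<n. if i \<le> m \<and> m < j then A j i else 0) = (if i < j then A j i * (int j - int i) else 0)" .
    qed
    finally show ?thesis .
  qed
  define W where "W = (\<Sum>m<n. e m)"
  have b0: "b \<ge> 0" unfolding b_def by (intro sum_nonneg) (auto intro: Age)
  have Wb: "W \<ge> b" unfolding W_def Wform b_def
  proof (intro sum_mono)
    fix i j assume "i \<in> {..<n}" "j \<in> {..<n}"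
    hence h: "i < n" "j < n" by auto
    show "(if i < j then A j i else 0) \<le> (if i < j then A j i * (int j - int i) else 0)"
    proof (cases "i < j")
      case True
      hence "A j i * 1 \<le> A j i * (int j - int i)" using Age[OF h(2) h(1)] by (intro mult_left_mono) auto
      thus ?thesis using True by simp
    qed simp
  qed
  have WL: "W \<ge> int L * b - int n * (int L)^2" for L :: nat
  proof -
    have "int L * b - int L * (\<Sum>i<n. \<Sum>j<n. if i < j \<and> j < i + L then 1 else 0)
        = (\<Sum>i<n. \<Sum>j<n. int L * (if i < j then A j i else 0) - int L * (if i < j \<and> j < i + L then 1 else 0))"
      by (simp add: b_def sum_distrib_left sum_subtractf)
    also have "\<dots> \<le> W" unfolding W_def Wform
    proof (intro sum_mono)
      fix i j assume "i \<in> {..<n}" "j \<in> {..<n}"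
      hence h: "i < n" "j < n" by auto
      show "int L * (if i < j then A j i else 0) - int L * (if i < j \<and> j < i + L then 1 else 0)
            \<le> (if i < j then A j i * (int j - int i) else 0)"
      proof (cases "i < j")
        case True
        show ?thesis
        proof (cases "j < i + L")
          case True2: True
          have "A j i \<le> 1" using A01[OF h(2) h(1)] by auto
          moreover have "A j i * (int j - int i) \<ge> 0" using Age[OF h(2) h(1)] True by simp
          moreover have "int L * A j i \<le> int L * 1" using \<open>A j i \<le> 1\<close> by (intro mult_left_mono) auto
          ultimately have "int L * A j i - int L * 1 \<le> A j i * (int j - int i)" by linarith
          thus ?thesis using True True2 by simp
        next
          case False2: False
          have "int L \<le> int j - int i" using False2 by simp
          hence "A j i * int L \<le> A j i * (int j - int i)" using Age[OF h(2) h(1)] by (intro mult_left_mono)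
          thus ?thesis using True False2 by (simp add: mult.commute)
        qed
      qed simp
    qed
    finally have "int L * b - int L * (\<Sum>i<n. \<Sum>j<n. if i < j \<and> j < i + L then 1 else 0) \<le> W" .
    moreover have "(\<Sum>i<n. \<Sum>j<n. if i < j \<and> j < i + L then 1 else 0::int) \<le> (\<Sum>i<n. int L)"
      by (intro sum_mono count_short)
    hence "int L * (\<Sum>i<n. \<Sum>j<n. if i < j \<and> j < i + L then 1 else 0::int) \<le> int L * (int n * int L)"
      by (intro mult_left_mono) auto
    ultimately show ?thesis by (simp add: power2_eq_square algebra_simps)
  qed
  have "b^2 \<le> 8 * int n * W" by (rule final_arith[OF npos Wb b0 WL])
  moreover have "W \<le> D" using DW W_def by simp
  hence "8 * int n * W \<le> 8 * int n * D" by (intro mult_left_mono) auto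
  ultimately have "3 * b^2 \<le> 3 * (8 * int n * D)" by linarith
  also have "\<dots> = 8 * int n * (3 * D)" by simp
  also have "\<dots> = 16 * int n * Cyc" using CD by simp
  finally show ?thesis unfolding b_def Cyc_def .
qed



type_synonym tri = "nat \<times> nat \<times> nat \<times> nat"

fun rot :: "tri \<Rightarrow> tri" where
  "rot (x, y, z, p) = (y, z, x, (p + 1) mod 3)"

fun st :: "tri \<Rightarrow> nat \<times> nat \<times> nat" where
  "st (x, y, z, p) = (x, y, p)"

lemma rot3: "snd (snd (snd t)) < 3 \<Longrightarrow> rot (rot (rot t)) = t"
proof -
  assume a: "snd (snd (snd t)) < 3"
  obtain x y z p where t: "t = (x, y, z, p)" by (cases t) auto
  have "p = 0 \<or> p = 1 \<or> p = 2" using a t by auto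
  thus ?thesis using t by auto
qed

lemma exists_outside:
  assumes "finite B" "card A > card B" shows "\<exists>a\<in>A. a \<notin> B"
proof (rule ccontr)
  assume "\<not> ?thesis" hence "A \<subseteq> B" by auto
  hence "card A \<le> card B" using assms(1) by (rule card_mono[rotated])
  thus False using assms(2) by simp
qed

lemma prune:
  fixes Q :: "tri set" and k :: nat
  assumes "finite Q" "\<forall>t\<in>Q. rot t \<in> Q" "\<forall>t\<in>Q. snd (snd (snd t)) < 3"
    "card Q > 3 * k * card (st ` Q)"
  shows "\<exists>G\<subseteq>Q. G \<noteq> {} \<and> (\<forall>t\<in>G. rot t \<in> G) \<and>
           (\<forall>x y z p. (x, y, z, p) \<in> G \<longrightarrow> card {z'. (x, y, z', p) \<in> G} \<ge> k)"
  using assms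
proof (induction "card Q" arbitrary: Q rule: less_induct)
  case less
  note fin = less.prems(1) and rc = less.prems(2) and p3 = less.prems(3) and big = less.prems(4)
  have One: "Q \<noteq> {}" using big by auto
  show ?case
  proof (cases "\<forall>x y z p. (x, y, z, p) \<in> Q \<longrightarrow> card {z'. (x, y, z', p) \<in> Q} \<ge> k")
    case True thus ?thesis using One rc by blast
  next
    case False
    then obtain x y z p where t: "(x, y, z, p) \<in> Q" and small: "card {z'. (x, y, z', p) \<in> Q} < k"
      by (auto simp: not_le)
    define s where "s = (x, y, p)"
    define R0 where "R0 = {t\<in>Q. st t = s}"
    define R where "R = {t\<in>Q. st t = s \<or> st (rot t) = s \<or> st (rot (rot t)) = s}"
    define Q' where "Q' = Q - R"
    have Zfin: "finite {z'. (x, y, z', p) \<in> Q}"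
    proof (rule finite_subset)
      show "{z'. (x, y, z', p) \<in> Q} \<subseteq> (\<lambda>t. fst (snd (snd t))) ` Q" by force
    qed (use fin in auto)
    have R0img: "R0 \<subseteq> (\<lambda>z'. (x, y, z', p)) ` {z'. (x, y, z', p) \<in> Q}"
    proof
      fix t assume "t \<in> R0"
      then obtain a b c e where "t = (a, b, c, e)" "(a,b,c,e) \<in> Q" "st (a,b,c,e) = s"
        unfolding R0_def by (cases t) auto
      thus "t \<in> (\<lambda>z'. (x, y, z', p)) ` {z'. (x, y, z', p) \<in> Q}" by (auto simp: s_def)
    qed
    have cR0: "card R0 < k"
    proof -
      have "card R0 \<le> card ((\<lambda>z'. (x, y, z', p)) ` {z'. (x, y, z', p) \<in> Q})"
        by (rule card_mono[OF finite_imageI[OF Zfin] R0img])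
      also have "\<dots> \<le> card {z'. (x, y, z', p) \<in> Q}" by (rule card_image_le[OF Zfin])
      finally show ?thesis using small by simp
    qed
    have Rsub: "R \<subseteq> R0 \<union> (rot \<circ> rot) ` R0 \<union> rot ` R0"
    proof
      fix t assume tR: "t \<in> R"
      hence tO: "t \<in> Q" unfolding R_def by simp
      have r3: "rot (rot (rot t)) = t" using p3 tO rot3 by blast
      show "t \<in> R0 \<union> (rot \<circ> rot) ` R0 \<union> rot ` R0"
      proof -
        consider "st t = s" | "st (rot t) = s" | "st (rot (rot t)) = s" using tR unfolding R_def by blast
        thus ?thesis
        proof cases
          case 1 thus ?thesis using tO unfolding R0_def by auto
        next
          case 2
          have "rot t \<in> R0" using 2 rc tO unfolding R0_def by auto
          hence "(rot \<circ> rot) (rot t) \<in> (rot \<circ> rot) ` R0" by blast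
          thus ?thesis using r3 by auto
        next
          case 3
          have "rot (rot t) \<in> R0" using 3 rc tO unfolding R0_def by auto
          hence "rot (rot (rot t)) \<in> rot ` R0" by blast
          thus ?thesis using r3 by auto
        qed
      qed
    qed
    have R0fin: "finite R0" using fin unfolding R0_def by simp
    have cR: "card R \<le> 3 * card R0"
    proof -
      have "card R \<le> card (R0 \<union> (rot \<circ> rot) ` R0 \<union> rot ` R0)"
        by (rule card_mono[OF _ Rsub]) (use R0fin in simp)
      also have "\<dots> \<le> card R0 + card ((rot \<circ> rot) ` R0) + card (rot ` R0)"
        by (meson card_Un_le le_trans add_le_mono order_refl)
      also have "\<dots> \<le> card R0 + card R0 + card R0"
        using card_image_le[OF R0fin] by (meson add_le_mono order_refl)
      finally show ?thesis by simp
    qed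
    have tR: "(x, y, z, p) \<in> R" using t unfolding R_def s_def by simp
    have RO: "R \<subseteq> Q" unfolding R_def by auto
    have cO': "card Q' = card Q - card R" unfolding Q'_def
      by (rule card_Diff_subset[OF finite_subset[OF RO fin] RO])
    have lt: "card Q' < card Q" unfolding Q'_def
      using tR t fin by (intro psubset_card_mono) auto
    have fin': "finite Q'" using fin unfolding Q'_def by simp
    have rc': "\<forall>t\<in>Q'. rot t \<in> Q'"
    proof
      fix t assume tO': "t \<in> Q'"
      hence tO: "t \<in> Q" and nR: "t \<notin> R" unfolding Q'_def by auto
      have r3: "rot (rot (rot t)) = t" using p3 tO rot3 by blast
      have "rot t \<notin> R"
      proof
        assume "rot t \<in> R"
        hence "st (rot t) = s \<or> st (rot (rot t)) = s \<or> st (rot (rot (rot t))) = s" unfolding R_def by simp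
        thus False using nR tO r3 unfolding R_def by auto
      qed
      thus "rot t \<in> Q'" using rc tO unfolding Q'_def by simp
    qed
    have p3': "\<forall>t\<in>Q'. snd (snd (snd t)) < 3" using p3 unfolding Q'_def by simp
    have stsub: "st ` Q' \<subseteq> st ` Q - {s}"
      unfolding Q'_def R_def by auto
    have sin: "s \<in> st ` Q" using t unfolding s_def by force
    have stfin: "finite (st ` Q)" using fin by simp
    have cst: "card (st ` Q') \<le> card (st ` Q) - 1"
    proof -
      have "card (st ` Q') \<le> card (st ` Q - {s})" by (rule card_mono[OF _ stsub]) (use stfin in simp)
      also have "\<dots> = card (st ` Q) - 1" using sin stfin by simp
      finally show ?thesis .
    qed
    have cstpos: "card (st ` Q) \<ge> 1" proof -
      have "st ` Q \<noteq> {}" using sin by blast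
      hence "card (st ` Q) > 0" using stfin by (simp add: card_gt_0_iff)
      thus ?thesis by simp
    qed
    have kpos: "k \<ge> 1" using cR0 by simp
    have "3 * k * card (st ` Q') \<le> 3 * k * (card (st ` Q) - 1)"
      using cst by simp
    also have "\<dots> = 3 * k * card (st ` Q) - 3 * k" by (simp add: right_diff_distrib')
    also have "\<dots> < card Q - card R"
    proof -
      have "card R \<le> 3 * k - 3" using cR cR0 by simp
      moreover have "3 * k \<le> 3 * k * card (st ` Q)" using cstpos by simp
      ultimately show ?thesis using big by linarith
    qed
    finally have big': "card Q' > 3 * k * card (st ` Q')" using cO' by simp
    obtain G where "G \<subseteq> Q'" "G \<noteq> {}" "\<forall>t\<in>G. rot t \<in> G"
      "\<forall>x y z p. (x, y, z, p) \<in> G \<longrightarrow> card {z'. (x, y, z', p) \<in> G} \<ge> k"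
      using less.hyps[OF lt fin' rc' p3' big'] by blast
    thus ?thesis unfolding Q'_def by blast
  qed
qed


lemma greedy:
  fixes G :: "tri set" and k :: nat
  assumes ne: "G \<noteq> {}" and rc: "\<forall>t\<in>G. rot t \<in> G" and p3: "\<forall>t\<in>G. snd (snd (snd t)) < 3"
    and good: "\<forall>x y z p. (x, y, z, p) \<in> G \<longrightarrow> card {z'. (x, y, z', p) \<in> G} \<ge> k"
    and dis: "\<forall>x y z p. (x, y, z, p) \<in> G \<longrightarrow> x \<noteq> y \<and> y \<noteq> z \<and> z \<noteq> x"
    and k3: "3 \<le> k"
  shows "\<exists>vs p0. length vs = k \<and> distinct vs \<and>
           (\<forall>j. j + 2 < length vs \<longrightarrow> (vs ! j, vs ! (j+1), vs ! (j+2), (p0 + j) mod 3) \<in> G)"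
proof -
  have "n + 3 \<le> k \<longrightarrow> (\<exists>vs p0. length vs = n + 3 \<and> distinct vs \<and>
           (\<forall>j. j + 2 < length vs \<longrightarrow> (vs ! j, vs ! (j+1), vs ! (j+2), (p0 + j) mod 3) \<in> G))" for n
  proof (induction n)
    case 0
    obtain x y z p where t: "(x, y, z, p) \<in> G" using ne by (metis ex_in_conv prod_cases4)
    have "p < 3" using p3 t by auto
    hence "\<forall>j. j + 2 < length [x,y,z] \<longrightarrow> ([x,y,z] ! j, [x,y,z] ! (j+1), [x,y,z] ! (j+2), (p + j) mod 3) \<in> G"
      using t by auto
    moreover have "distinct [x,y,z]" using dis t by auto
    ultimately show ?case by (metis length_Cons list.size(3) numeral_3_eq_3 add_0)
  next
    case (Suc n)
    show ?case
    proof
      assume le: "Suc n + 3 \<le> k"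
      then obtain vs p0 where len: "length vs = n + 3" and dv: "distinct vs"
        and P: "\<forall>j. j + 2 < length vs \<longrightarrow> (vs ! j, vs ! (j+1), vs ! (j+2), (p0 + j) mod 3) \<in> G"
        using Suc.IH by auto
      have last: "(vs ! n, vs ! (n+1), vs ! (n+2), (p0 + n) mod 3) \<in> G" using P len by auto
      have "rot (vs ! n, vs ! (n+1), vs ! (n+2), (p0 + n) mod 3) \<in> G" using rc last by blast
      hence r: "(vs ! (n+1), vs ! (n+2), vs ! n, (p0 + (n + 1)) mod 3) \<in> G"
        by (simp add: mod_Suc_eq)
      define Z where "Z = {z'. (vs ! (n+1), vs ! (n+2), z', (p0 + (n + 1)) mod 3) \<in> G}"
      have "card Z \<ge> k" unfolding Z_def using good r by blast
      hence "card Z > card (set vs)" using le len distinct_card[OF dv] by simp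
      then obtain w where wZ: "w \<in> Z" and wn: "w \<notin> set vs"
        using exists_outside[of "set vs" Z] by auto
      define vs' where "vs' = vs @ [w]"
      have len': "length vs' = Suc n + 3" using len unfolding vs'_def by simp
      have dv': "distinct vs'" using dv wn unfolding vs'_def by simp
      have P': "\<forall>j. j + 2 < length vs' \<longrightarrow> (vs' ! j, vs' ! (j+1), vs' ! (j+2), (p0 + j) mod 3) \<in> G"
      proof (intro allI impI)
        fix j assume j: "j + 2 < length vs'"
        show "(vs' ! j, vs' ! (j+1), vs' ! (j+2), (p0 + j) mod 3) \<in> G"
        proof (cases "j + 2 < length vs")
          case True thus ?thesis using P unfolding vs'_def by (simp add: nth_append)
        next
          case False
          hence jn: "j = n + 1" using j len len' by simp
          show ?thesis using wZ len unfolding Z_def vs'_def jn by (simp add: nth_append)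
        qed
      qed
      show "\<exists>vs p0. length vs = Suc n + 3 \<and> distinct vs \<and>
           (\<forall>j. j + 2 < length vs \<longrightarrow> (vs ! j, vs ! (j+1), vs ! (j+2), (p0 + j) mod 3) \<in> G)"
        using len' dv' P' by blast
    qed
  qed
  from this[of "k - 3"] k3 show ?thesis by simp
qed



lemma card_filter_int: "finite S \<Longrightarrow> int (card {j\<in>S. P j}) = (\<Sum>j\<in>S. if P j then 1 else 0)"
  by (simp add: sum.If_cases Int_def)

lemma ordering_exists:
  fixes V :: "nat set" and g :: "nat \<Rightarrow> int"
  assumes "finite V"
  shows "\<exists>\<pi>. bij_betw \<pi> {..<card V} V \<and> (\<forall>i j. i \<le> j \<longrightarrow> j < card V \<longrightarrow> g (\<pi> j) \<le> g (\<pi> i))"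
proof -
  define xs where "xs = sort_key (\<lambda>v. - g v) (sorted_list_of_set V)"
  have d: "distinct xs" and s: "set xs = V" and l: "length xs = card V"
    using assms by (auto simp: xs_def)
  have bij: "bij_betw ((!) xs) {..<card V} V" by (rule bij_betw_nth[OF d]) (auto simp: l s)
  have so: "sorted (map (\<lambda>v. - g v) xs)" unfolding xs_def by simp
  have "g (xs ! j) \<le> g (xs ! i)" if "i \<le> j" "j < card V" for i j
  proof -
    have "map (\<lambda>v. - g v) xs ! i \<le> map (\<lambda>v. - g v) xs ! j"
      by (rule sorted_nth_mono[OF so that(1)]) (use that l in simp)
    thus ?thesis using that l by simp
  qed
  thus ?thesis using bij by blast
qed

lemma far_cyc:
  fixes V :: "nat set" and T :: "nat \<Rightarrow> nat \<Rightarrow> bool" and \<delta> :: real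
  assumes tour: "tournament V T" and far: "delta_far_transitive \<delta> V T" and npos: "card V > 0"
    and dpos: "\<delta> > 0"
  shows "16 * real (card {(x, y, z). x \<in> V \<and> y \<in> V \<and> z \<in> V \<and> T x y \<and> T y z \<and> T z x})
          > 3 * \<delta>^2 * real (card V)^3"
proof -
  define n where "n = card V"
  have finV: "finite V" using tour unfolding tournament_def by blast
  have irr: "\<And>x. x \<in> V \<Longrightarrow> \<not> T x x" using tour unfolding tournament_def by blast
  have tot: "\<And>x y. x \<in> V \<Longrightarrow> y \<in> V \<Longrightarrow> x \<noteq> y \<Longrightarrow> T x y \<longleftrightarrow> \<not> T y x"
    using tour unfolding tournament_def by blast
  have inV: "\<And>x y. T x y \<Longrightarrow> x \<in> V \<and> y \<in> V" using tour unfolding tournament_def by blast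
  define g where "g v = (\<Sum>w\<in>V. if T v w then 1 else 0::int)" for v
  obtain \<pi> where bij0: "bij_betw \<pi> {..<card V} V"
      and mono0: "\<forall>i j. i \<le> j \<longrightarrow> j < card V \<longrightarrow> g (\<pi> j) \<le> g (\<pi> i)"
    using ordering_exists[OF finV, of g] by blast
  have bij: "bij_betw \<pi> {..<n} V" using bij0 n_def by simp
  have mono: "\<And>i j. i \<le> j \<Longrightarrow> j < n \<Longrightarrow> g (\<pi> j) \<le> g (\<pi> i)" using mono0 n_def by simp
  have piV: "\<pi> i \<in> V" if "i < n" for i using bij_betw_apply[OF bij] that by simp
  have inj: "inj_on \<pi> {..<n}" using bij by (rule bij_betw_imp_inj_on)
  have piinj: "i = j" if "i < n" "j < n" "\<pi> i = \<pi> j" for i j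
    using inj_onD[OF inj that(3)] that by simp
  have reidx: "(\<Sum>i<n. h (\<pi> i)) = (\<Sum>x\<in>V. h x)" for h :: "nat \<Rightarrow> int"
    by (rule sum.reindex_bij_betw[OF bij])
  define A where "A i j = (if T (\<pi> i) (\<pi> j) then 1 else 0::int)" for i j
  have rows: "(\<Sum>l<n. A j l) = g (\<pi> j)" for j
    unfolding A_def g_def by (rule reidx)
  have key: "3 * (\<Sum>i<n. \<Sum>j<n. if i < j then A j i else 0)^2
           \<le> 16 * int n * (\<Sum>i<n. \<Sum>j<n. \<Sum>l<n. A i j * A j l * A l i)"
  proof (rule cyc_bound)
    show "A i j = 0 \<or> A i j = 1" for i j unfolding A_def by simp
    show "A i i = 0" if "i < n" for i unfolding A_def using irr[OF piV[OF that]] by simp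
    show "A i j + A j i = 1" if "i < n" "j < n" "i \<noteq> j" for i j
    proof -
      have "\<pi> i \<noteq> \<pi> j" using piinj that by blast
      hence "T (\<pi> i) (\<pi> j) \<longleftrightarrow> \<not> T (\<pi> j) (\<pi> i)" using tot piV that by blast
      thus ?thesis unfolding A_def by auto
    qed
    show "i \<le> j \<Longrightarrow> j < n \<Longrightarrow> (\<Sum>l<n. A j l) \<le> (\<Sum>l<n. A i l)" for i j
      unfolding rows using mono by simp
  qed
  define I where "I = Sigma {..<n} (\<lambda>i. {j\<in>{..<n}. i < j \<and> T (\<pi> j) (\<pi> i)})"
  define F where "F = (\<lambda>(i, j). (\<pi> j, \<pi> i)) ` I"
  have Ifin: "finite I" unfolding I_def by simp
  have injI: "inj_on (\<lambda>(i, j). (\<pi> j, \<pi> i)) I"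
    unfolding inj_on_def I_def using piinj by auto
  have bF: "(\<Sum>i<n. \<Sum>j<n. if i < j then A j i else 0) = int (card F)"
  proof -
    have "int (card F) = int (card I)" unfolding F_def using card_image[OF injI] by simp
    also have "\<dots> = (\<Sum>i<n. int (card {j\<in>{..<n}. i < j \<and> T (\<pi> j) (\<pi> i)}))"
      unfolding I_def by (subst card_SigmaI) auto
    also have "\<dots> = (\<Sum>i<n. \<Sum>j<n. if i < j \<and> T (\<pi> j) (\<pi> i) then 1 else 0)"
      by (intro sum.cong refl card_filter_int) simp
    also have "\<dots> = (\<Sum>i<n. \<Sum>j<n. if i < j then A j i else 0)"
      unfolding A_def by (intro sum.cong refl) auto
    finally show ?thesis by simp
  qed
  define C where "C = {(x, y, z). x \<in> V \<and> y \<in> V \<and> z \<in> V \<and> T x y \<and> T y z \<and> T z x}"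
  have cycC: "(\<Sum>i<n. \<Sum>j<n. \<Sum>l<n. A i j * A j l * A l i) = int (card C)"
  proof -
    have r3: "(\<Sum>l<n. (if T a b \<and> T b (\<pi> l) \<and> T (\<pi> l) a then 1 else 0::int))
             = (\<Sum>z\<in>V. if T a b \<and> T b z \<and> T z a then 1 else 0)" for a b
      by (rule reidx)
    have r2: "(\<Sum>j<n. \<Sum>z\<in>V. (if T a (\<pi> j) \<and> T (\<pi> j) z \<and> T z a then 1 else 0::int))
             = (\<Sum>y\<in>V. \<Sum>z\<in>V. if T a y \<and> T y z \<and> T z a then 1 else 0)" for a
      by (rule reidx)
    have r1: "(\<Sum>i<n. \<Sum>y\<in>V. \<Sum>z\<in>V. (if T (\<pi> i) y \<and> T y z \<and> T z (\<pi> i) then 1 else 0::int))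
             = (\<Sum>x\<in>V. \<Sum>y\<in>V. \<Sum>z\<in>V. if T x y \<and> T y z \<and> T z x then 1 else 0)"
      by (rule reidx)
    have "(\<Sum>i<n. \<Sum>j<n. \<Sum>l<n. A i j * A j l * A l i)
        = (\<Sum>i<n. \<Sum>j<n. \<Sum>l<n. (if T (\<pi> i) (\<pi> j) \<and> T (\<pi> j) (\<pi> l) \<and> T (\<pi> l) (\<pi> i) then 1 else 0::int))"
      unfolding A_def by (intro sum.cong refl) auto
    also have "\<dots> = (\<Sum>x\<in>V. \<Sum>y\<in>V. \<Sum>z\<in>V. (if T x y \<and> T y z \<and> T z x then 1 else 0::int))"
      by (simp only: r3 r2 r1)
    also have "\<dots> = (\<Sum>x\<in>V. \<Sum>y\<in>V. int (card {z\<in>V. T x y \<and> T y z \<and> T z x}))"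
      by (intro sum.cong refl card_filter_int[symmetric] finV)
    also have "\<dots> = int (card (Sigma V (\<lambda>x. Sigma V (\<lambda>y. {z\<in>V. T x y \<and> T y z \<and> T z x}))))"
      using finV by (simp add: card_SigmaI)
    also have "Sigma V (\<lambda>x. Sigma V (\<lambda>y. {z\<in>V. T x y \<and> T y z \<and> T z x})) = C"
      unfolding C_def by auto
    finally show ?thesis .
  qed
  have Fsub: "F \<subseteq> arcs V T"
    unfolding F_def I_def arcs_def using piV by auto
  define pos where "pos = the_inv_into {..<n} \<pi>"
  have pos1: "x \<in> V \<Longrightarrow> pos x < n \<and> \<pi> (pos x) = x" for x
    unfolding pos_def using bij
    by (metis bij_betw_def f_the_inv_into_f_bij_betw lessThan_iff the_inv_into_into order_refl)
  have pos2: "i < n \<Longrightarrow> pos (\<pi> i) = i" for i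
    unfolding pos_def using bij by (simp add: bij_betw_def the_inv_into_f_f)
  define S where "S = {(u, w). u \<in> V \<and> w \<in> V \<and> pos u < pos w}"
  have transS: "trans S" unfolding S_def trans_def by auto
  have RS: "arcs V (reverse_arcs T F) \<subseteq> S"
  proof
    fix e assume "e \<in> arcs V (reverse_arcs T F)"
    then obtain u w where e: "e = (u, w)" and uV: "u \<in> V" and wV: "w \<in> V" and r: "reverse_arcs T F u w"
      unfolding arcs_def by auto
    define i where "i = pos u"
    define j where "j = pos w"
    have hi: "i < n" "\<pi> i = u" using pos1[OF uV] i_def by auto
    have hj: "j < n" "\<pi> j = w" using pos1[OF wV] j_def by auto
    have "i < j"
    proof (cases "T u w \<and> (u, w) \<notin> F")
      case True
      have "u \<noteq> w" using True irr uV by auto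
      hence "i \<noteq> j" using hi hj by auto
      moreover have "\<not> j < i"
      proof
        assume "j < i"
        hence "(j, i) \<in> I" unfolding I_def using hi hj True by auto
        hence "(u, w) \<in> F" unfolding F_def using hi hj by force
        thus False using True by simp
      qed
      ultimately show ?thesis by simp
    next
      case False
      hence "(w, u) \<in> F" using r unfolding reverse_arcs_def by auto
      then obtain i' j' where "(i', j') \<in> I" "w = \<pi> j'" "u = \<pi> i'" unfolding F_def by auto
      hence "i' < j'" "i' < n" "j' < n" "w = \<pi> j'" "u = \<pi> i'" unfolding I_def by auto
      thus ?thesis using hi hj piinj by metis
    qed
    thus "e \<in> S" unfolding S_def e i_def j_def using uV wV by simp
  qed
  have acyc: "acyclic (arcs V (reverse_arcs T F))"
  proof (rule acyclic_subset[OF _ RS])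
    show "acyclic S" unfolding acyclic_def using transS by (simp add: S_def)
  qed
  have cF: "real (card F) > \<delta> * (real n)^2"
    using far Fsub acyc unfolding delta_far_transitive_def delta_close_transitive_def n_def
    by (meson not_le)
  have k2: "3 * (int (card F))^2 \<le> 16 * int n * int (card C)" using key bF cycC by simp
  hence k3: "3 * (real (card F))^2 \<le> 16 * real n * real (card C)"
    by (metis (mono_tags, opaque_lifting) of_int_le_iff of_int_mult of_int_numeral of_int_of_nat_eq of_int_power)
  have np: "real n > 0" using npos n_def by simp
  have pos: "\<delta> * (real n)^2 > 0" using dpos np by simp
  have "(\<delta> * (real n)^2)^2 < (real (card F))^2"
    using cF pos by (intro power_strict_mono) auto
  hence "3 * (\<delta> * (real n)^2)^2 < 16 * real n * real (card C)" using k3 by linarith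
  hence "real n * (3 * \<delta>^2 * (real n)^3) < real n * (16 * real (card C))"
    by (simp add: power2_eq_square power3_eq_cube algebra_simps)
  hence "3 * \<delta>^2 * (real n)^3 < 16 * real (card C)" using np by (simp only: mult_less_cancel_left_pos)
  thus ?thesis unfolding C_def n_def by simp
qed



definition cf :: "nat \<times> nat \<times> nat \<Rightarrow> nat \<Rightarrow> nat" where
  "cf c p = (if p = 0 then fst c else if p = 1 then fst (snd c) else snd (snd c))"

definition Hc :: "nat set \<Rightarrow> (nat \<Rightarrow> nat \<Rightarrow> bool) \<Rightarrow> (nat \<Rightarrow> nat \<Rightarrow> nat) \<Rightarrow> nat \<times> nat \<times> nat \<Rightarrow> tri set" where
  "Hc V T col c = {(x, y, z, p). x \<in> V \<and> y \<in> V \<and> z \<in> V \<and> T x y \<and> T y z \<and> T z x \<and> p < 3 \<and>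
      col x y = cf c p \<and> col y z = cf c ((p + 1) mod 3) \<and> col z x = cf c ((p + 2) mod 3)}"

lemma Hc_rot: "t \<in> Hc V T col c \<Longrightarrow> rot t \<in> Hc V T col c"
proof -
  assume h: "t \<in> Hc V T col c"
  obtain x y z p where t: "t = (x, y, z, p)" by (cases t) auto
  have "p = 0 \<or> p = 1 \<or> p = 2" using h t unfolding Hc_def by auto
  thus ?thesis
  proof (elim disjE)
    assume "p = 0" thus ?thesis using h t by (simp add: Hc_def)
  next
    assume "p = 1" thus ?thesis using h t by (simp add: Hc_def)
  next
    assume "p = 2" thus ?thesis using h t by (simp add: Hc_def numeral_2_eq_2)
  qed
qed

lemma Hc_p3: "t \<in> Hc V T col c \<Longrightarrow> snd (snd (snd t)) < 3"
  unfolding Hc_def by auto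

lemma Hc_fin: "finite V \<Longrightarrow> finite (Hc V T col c)"
proof -
  assume "finite V"
  moreover have "Hc V T col c \<subseteq> V \<times> V \<times> V \<times> {..<3}" unfolding Hc_def by auto
  ultimately show ?thesis by (meson finite_SigmaI finite_lessThan finite_subset)
qed

lemma Hc_st: "finite V \<Longrightarrow> card (st ` Hc V T col c) \<le> 3 * (card V)^2"
proof -
  assume f: "finite V"
  have "st ` Hc V T col c \<subseteq> V \<times> V \<times> {..<3}" unfolding Hc_def by auto
  hence "card (st ` Hc V T col c) \<le> card (V \<times> V \<times> {..<3::nat})"
    by (rule card_mono[rotated]) (use f in simp)
  also have "\<dots> = 3 * (card V)^2" by (simp add: card_cartesian_product power2_eq_square)
  finally show ?thesis .
qed

lemma Hc_dis: "(x, y, z, p) \<in> Hc V T col c \<Longrightarrow> tournament V T \<Longrightarrow> x \<noteq> y \<and> y \<noteq> z \<and> z \<noteq> x"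
proof -
  assume h: "(x, y, z, p) \<in> Hc V T col c" and t: "tournament V T"
  have irr: "\<forall>v\<in>V. \<not> T v v" using t unfolding tournament_def by blast
  show ?thesis using h irr unfolding Hc_def by auto
qed

lemma pigeon:
  fixes V :: "nat set" and T :: "nat \<Rightarrow> nat \<Rightarrow> bool" and col :: "nat \<Rightarrow> nat \<Rightarrow> nat"
  assumes finV: "finite V" and q: "q > 0" and colb: "\<forall>x y. T x y \<longrightarrow> col x y < q"
  shows "\<exists>c. card {(x, y, z). x \<in> V \<and> y \<in> V \<and> z \<in> V \<and> T x y \<and> T y z \<and> T z x}
             \<le> q^3 * card (Hc V T col c)"
proof -
  define C where "C = {(x, y, z). x \<in> V \<and> y \<in> V \<and> z \<in> V \<and> T x y \<and> T y z \<and> T z x}"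
  define K where "K = {..<q} \<times> {..<q} \<times> {..<q}"
  define \<kappa> where "\<kappa> t = (case t of (x, y, z) \<Rightarrow> (col x y, col y z, col z x))" for t
  define Cc where "Cc c = {t\<in>C. \<kappa> t = c}" for c
  have finC: "finite C"
  proof (rule finite_subset)
    show "C \<subseteq> V \<times> V \<times> V" unfolding C_def by auto
  qed (use finV in simp)
  have finK: "finite K" unfolding K_def by simp
  have cK: "card K = q^3" unfolding K_def by (simp add: card_cartesian_product power3_eq_cube)
  have KC: "C \<subseteq> (\<Union>c\<in>K. Cc c)"
  proof
    fix t assume "t \<in> C"
    then obtain x y z where t: "t = (x, y, z)" "T x y" "T y z" "T z x" unfolding C_def by auto
    have "\<kappa> t \<in> K" unfolding K_def \<kappa>_def using t colb by auto
    thus "t \<in> (\<Union>c\<in>K. Cc c)" using \<open>t \<in> C\<close> unfolding Cc_def by auto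
  qed
  have sumC: "card C \<le> (\<Sum>c\<in>K. card (Cc c))"
  proof -
    have "card C \<le> card (\<Union>c\<in>K. Cc c)"
      by (rule card_mono[OF _ KC]) (use finK finC in \<open>auto simp: Cc_def\<close>)
    also have "\<dots> \<le> (\<Sum>c\<in>K. card (Cc c))" by (rule card_UN_le[OF finK])
    finally show ?thesis .
  qed
  have "\<exists>c\<in>K. card C \<le> q^3 * card (Cc c)"
  proof (rule ccontr)
    assume "\<not> ?thesis"
    hence lt: "\<And>c. c \<in> K \<Longrightarrow> q^3 * card (Cc c) < card C" by (simp add: not_le)
    have Kne: "K \<noteq> {}" unfolding K_def using q by auto
    have "q^3 * card C \<le> q^3 * (\<Sum>c\<in>K. card (Cc c))" using sumC by simp
    also have "\<dots> = (\<Sum>c\<in>K. q^3 * card (Cc c))" by (simp add: sum_distrib_left)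
    also have "\<dots> < (\<Sum>c\<in>K. card C)" by (rule sum_strict_mono[OF finK Kne lt])
    also have "\<dots> = q^3 * card C" using cK by simp
    finally show False by simp
  qed
  then obtain c where "card C \<le> q^3 * card (Cc c)" by blast
  moreover have "card (Cc c) \<le> card (Hc V T col c)"
  proof (rule card_inj_on_le)
    show "inj_on (\<lambda>(x, y, z). (x, y, z, 0::nat)) (Cc c)" by (auto simp: inj_on_def)
    show "(\<lambda>(x, y, z). (x, y, z, 0::nat)) ` Cc c \<subseteq> Hc V T col c"
      unfolding Cc_def C_def Hc_def \<kappa>_def cf_def by auto
    show "finite (Hc V T col c)" by (rule Hc_fin[OF finV])
  qed
  ultimately show ?thesis unfolding C_def by (meson le_trans mult_le_mono2)
qed

lemma path_props:
  assumes P: "\<forall>j. j + 2 < length vs \<longrightarrow> (vs ! j, vs ! (j+1), vs ! (j+2), (p0 + j) mod 3) \<in> Hc V T col c"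
    and l3: "length vs \<ge> 3"
  shows "set vs \<subseteq> V"
    and "\<forall>j. j + 1 < length vs \<longrightarrow> T (vs ! j) (vs ! (j+1)) \<and> col (vs ! j) (vs ! (j+1)) = cf c ((p0 + j) mod 3)"
    and "\<forall>j. j + 2 < length vs \<longrightarrow> T (vs ! (j+2)) (vs ! j) \<and> col (vs ! (j+2)) (vs ! j) = cf c ((p0 + j + 2) mod 3)"
proof -
  show "set vs \<subseteq> V"
  proof
    fix v assume "v \<in> set vs"
    then obtain j where j: "j < length vs" "v = vs ! j" by (auto simp: in_set_conv_nth)
    show "v \<in> V"
    proof (cases "j + 2 < length vs")
      case True
      hence "(vs ! j, vs ! (j+1), vs ! (j+2), (p0 + j) mod 3) \<in> Hc V T col c" using P by blast
      thus ?thesis using j unfolding Hc_def by auto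
    next
      case False
      show ?thesis
      proof (cases "j + 1 < length vs")
        case True
        have "(j - 1) + 2 < length vs" using True False l3 by simp
        hence "(vs ! (j-1), vs ! (j-1+1), vs ! (j-1+2), (p0 + (j-1)) mod 3) \<in> Hc V T col c" using P by blast
        moreover have "j - 1 + 1 = j" using False l3 j by simp
        ultimately show ?thesis using j unfolding Hc_def by auto
      next
        case False2: False
        have "(j - 2) + 2 < length vs" using False2 False l3 j by simp
        hence "(vs ! (j-2), vs ! (j-2+1), vs ! (j-2+2), (p0 + (j-2)) mod 3) \<in> Hc V T col c" using P by blast
        moreover have "j - 2 + 2 = j" using False2 l3 j by simp
        ultimately show ?thesis using j unfolding Hc_def by auto
      qed
    qed
  qed
  show "\<forall>j. j + 1 < length vs \<longrightarrow> T (vs ! j) (vs ! (j+1)) \<and> col (vs ! j) (vs ! (j+1)) = cf c ((p0 + j) mod 3)"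
  proof (intro allI impI)
    fix j assume j: "j + 1 < length vs"
    show "T (vs ! j) (vs ! (j+1)) \<and> col (vs ! j) (vs ! (j+1)) = cf c ((p0 + j) mod 3)"
    proof (cases "j + 2 < length vs")
      case True
      hence "(vs ! j, vs ! (j+1), vs ! (j+2), (p0 + j) mod 3) \<in> Hc V T col c" using P by blast
      thus ?thesis unfolding Hc_def by auto
    next
      case False
      have "(j - 1) + 2 < length vs" using j False l3 by simp
      hence h: "(vs ! (j-1), vs ! (j-1+1), vs ! (j-1+2), (p0 + (j-1)) mod 3) \<in> Hc V T col c" using P by blast
      have e1: "j - 1 + 1 = j" and e2: "j - 1 + 2 = j + 1" using False l3 j by simp_all
      have jj: "p0 + (j - 1) + 1 = p0 + j" using False l3 j by simp
      have e3: "((p0 + (j - 1)) mod 3 + 1) mod 3 = (p0 + j) mod 3"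
        by (subst mod_add_left_eq) (simp only: jj)
      have e3': "Suc ((p0 + (j - Suc 0)) mod 3) mod 3 = (p0 + j) mod 3" using e3 by simp
      show ?thesis using h unfolding Hc_def e1 e2 e3 by (auto simp: e3')
    qed
  qed
  show "\<forall>j. j + 2 < length vs \<longrightarrow> T (vs ! (j+2)) (vs ! j) \<and> col (vs ! (j+2)) (vs ! j) = cf c ((p0 + j + 2) mod 3)"
  proof (intro allI impI)
    fix j assume j: "j + 2 < length vs"
    have "((p0 + j) mod 3 + 2) mod 3 = (p0 + j + 2) mod 3" by (rule mod_add_left_eq)
    moreover have "(vs ! j, vs ! (j+1), vs ! (j+2), (p0 + j) mod 3) \<in> Hc V T col c" using P j by blast
    ultimately show "T (vs ! (j+2)) (vs ! j) \<and> col (vs ! (j+2)) (vs ! j) = cf c ((p0 + j + 2) mod 3)"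
      unfolding Hc_def by auto
  qed
qed



lemma main_path:
  fixes \<delta> :: real and q :: nat and V :: "nat set" and T :: "nat \<Rightarrow> nat \<Rightarrow> bool" and col :: "nat \<Rightarrow> nat \<Rightarrow> nat"
  assumes dpos: "\<delta> > 0" and qpos: "q > 0" and npos: "card V > 0" and tour: "tournament V T"
    and far: "delta_far_transitive \<delta> V T" and colb: "\<forall>x y. T x y \<longrightarrow> col x y < q"
  shows "\<exists>vs c p0. distinct vs \<and> set vs \<subseteq> V \<and>
     real (length vs) \<ge> 1/216 * \<delta>^2 * real (card V) / real q ^ 3 \<and>
     (\<forall>j. j + 1 < length vs \<longrightarrow> T (vs ! j) (vs ! (j+1)) \<and> col (vs ! j) (vs ! (j+1)) = cf c ((p0 + j) mod 3)) \<and>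
     (\<forall>j. j + 2 < length vs \<longrightarrow> T (vs ! (j+2)) (vs ! j) \<and> col (vs ! (j+2)) (vs ! j) = cf c ((p0 + j + 2) mod 3))"
proof -
  define n where "n = card V"
  define \<beta> where "\<beta> = 1/216 * \<delta>^2 * real (card V) / real q ^ 3"
  have finV: "finite V" using npos card_ge_0_finite by blast
  show ?thesis
  proof (cases "\<beta> \<le> 1")
    case True
    obtain v where v: "v \<in> V" using npos by (metis card.empty ex_in_conv less_irrefl)
    have "distinct [v] \<and> set [v] \<subseteq> V \<and> real (length [v]) \<ge> \<beta> \<and>
     (\<forall>j. j + 1 < length [v] \<longrightarrow> T ([v] ! j) ([v] ! (j+1)) \<and> col ([v] ! j) ([v] ! (j+1)) = cf (0,0,0) ((0 + j) mod 3)) \<and>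
     (\<forall>j. j + 2 < length [v] \<longrightarrow> T ([v] ! (j+2)) ([v] ! j) \<and> col ([v] ! (j+2)) ([v] ! j) = cf (0,0,0) ((0 + j + 2) mod 3))"
      using v True by simp
    thus ?thesis unfolding \<beta>_def by blast
  next
    case False
    hence b1: "\<beta> > 1" by simp
    define C where "C = {(x, y, z). x \<in> V \<and> y \<in> V \<and> z \<in> V \<and> T x y \<and> T y z \<and> T z x}"
    have fc: "16 * real (card C) > 3 * \<delta>^2 * real n ^ 3"
      using far_cyc[OF tour far npos dpos] unfolding C_def n_def by simp
    obtain c where pc: "card C \<le> q^3 * card (Hc V T col c)"
      using pigeon[OF finV qpos colb] unfolding C_def by blast
    define H where "H = Hc V T col c"
    define k where "k = max 3 (nat \<lceil>\<beta>\<rceil>)"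
    have kb: "real k \<ge> \<beta>"
    proof -
      have "nat \<lceil>\<beta>\<rceil> \<le> k" unfolding k_def by simp
      hence "real (nat \<lceil>\<beta>\<rceil>) \<le> real k" by simp
      thus ?thesis using real_nat_ceiling_ge[of \<beta>] by linarith
    qed
    have kb3: "real k < 3 * \<beta>"
    proof -
      have "real (nat \<lceil>\<beta>\<rceil>) < \<beta> + 1" using b1 by linarith
      moreover have "real (3::nat) < 3 * \<beta>" using b1 by simp
      ultimately show ?thesis unfolding k_def using b1 by (simp add: max_def)
    qed
    have k3: "k \<ge> 3" unfolding k_def by simp
    define Qr where "Qr = real q ^ 3"
    have Qpos: "Qr > 0" unfolding Qr_def using qpos by simp
    have np: "real n > 0" using npos n_def by simp
    have hb: "real (card C) \<le> Qr * real (card H)" using pc unfolding H_def Qr_def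
      by (metis of_nat_le_iff of_nat_mult of_nat_power)
    have s1: "Qr * (9 * real k * (real n)^2) < Qr * (27 * \<beta> * (real n)^2)"
      using kb3 Qpos np by (intro mult_strict_left_mono) auto
    have s2: "Qr * (27 * \<beta> * (real n)^2) = 1/8 * \<delta>^2 * (real n)^3"
      unfolding \<beta>_def Qr_def n_def using qpos by (simp add: field_simps power2_eq_square power3_eq_cube)
    have s3: "1/8 * \<delta>^2 * (real n)^3 < real (card C)"
    proof -
      have "0 \<le> \<delta>^2 * (real n)^3" using np by simp
      thus ?thesis using fc by linarith
    qed
    have "Qr * (9 * real k * (real n)^2) < Qr * real (card H)" using s1 s2 s3 hb by linarith
    hence s4: "9 * real k * (real n)^2 < real (card H)" using Qpos by simp
    have stb: "card (st ` H) \<le> 3 * n^2" unfolding H_def n_def by (rule Hc_st[OF finV])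
    have "3 * k * card (st ` H) \<le> 3 * k * (3 * n^2)" using stb by simp
    hence "real (3 * k * card (st ` H)) \<le> real (3 * k * (3 * n^2))" by (simp only: of_nat_le_iff)
    also have "real (3 * k * (3 * n^2)) = 9 * real k * (real n)^2" by simp
    finally have "real (3 * k * card (st ` H)) \<le> 9 * real k * (real n)^2" .
    hence "real (3 * k * card (st ` H)) < real (card H)" using s4 by linarith
    hence big: "card H > 3 * k * card (st ` H)" by (simp only: of_nat_less_iff)
    have finH: "finite H" unfolding H_def by (rule Hc_fin[OF finV])
    have rcH: "\<forall>t\<in>H. rot t \<in> H" unfolding H_def using Hc_rot by blast
    have p3H: "\<forall>t\<in>H. snd (snd (snd t)) < 3" unfolding H_def using Hc_p3 by blast
    obtain G where G: "G \<subseteq> H" "G \<noteq> {}" "\<forall>t\<in>G. rot t \<in> G"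
      "\<forall>x y z p. (x, y, z, p) \<in> G \<longrightarrow> card {z'. (x, y, z', p) \<in> G} \<ge> k"
      using prune[OF finH rcH p3H big] by blast
    have p3G: "\<forall>t\<in>G. snd (snd (snd t)) < 3" using G(1) Hc_p3 unfolding H_def by blast
    have disG: "\<forall>x y z p. (x, y, z, p) \<in> G \<longrightarrow> x \<noteq> y \<and> y \<noteq> z \<and> z \<noteq> x"
      using G(1) Hc_dis[OF _ tour] unfolding H_def by blast
    obtain vs p0 where vs: "length vs = k" "distinct vs"
      "\<forall>j. j + 2 < length vs \<longrightarrow> (vs ! j, vs ! (j+1), vs ! (j+2), (p0 + j) mod 3) \<in> G"
      using greedy[OF G(2) G(3) p3G G(4) disG k3] by blast
    have PH: "\<forall>j. j + 2 < length vs \<longrightarrow> (vs ! j, vs ! (j+1), vs ! (j+2), (p0 + j) mod 3) \<in> Hc V T col c"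
      using vs(3) G(1) unfolding H_def by blast
    have l3: "length vs \<ge> 3" using vs(1) k3 by simp
    note pp = path_props[OF PH l3]
    have "real (length vs) \<ge> \<beta>" using vs(1) kb by simp
    thus ?thesis using vs(2) pp unfolding \<beta>_def by blast
  qed
qed


theorem theorem1p7:
  "\<exists>c::real. c > 0 \<and>
    (\<forall>(\<delta>::real) (q::nat) (V::nat set) (T::nat \<Rightarrow> nat \<Rightarrow> bool) (col::nat \<Rightarrow> nat \<Rightarrow> nat).
       \<delta> > 0 \<longrightarrow> q > 0 \<longrightarrow> card V > 0 \<longrightarrow> tournament V T \<longrightarrow>
       delta_far_transitive \<delta> V T \<longrightarrow>
       (\<forall>x y. T x y \<longrightarrow> col x y < q) \<longrightarrow>
       (\<exists>vs. directed_path V T vs \<and>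
              real (length vs) \<ge> c * \<delta>^2 * real (card V) / real q ^ 3 \<and>
              card {col (vs ! j) (vs ! (j + 1)) | j. j + 1 < length vs} \<le> 3) \<and>
       (\<exists>vs. distinct vs \<and> set vs \<subseteq> V \<and>
              real (length vs) \<ge> c * \<delta>^2 * real (card V) / real q ^ 3 \<and>
              (\<forall>j. j + 1 < length vs \<longrightarrow> T (vs ! j) (vs ! (j + 1))) \<and>
              (\<forall>j. j + 2 < length vs \<longrightarrow> T (vs ! (j + 2)) (vs ! j)) \<and>
              (\<forall>j. j + 4 < length vs \<longrightarrow>
                   col (vs ! j) (vs ! (j + 1)) = col (vs ! (j + 3)) (vs ! (j + 4))) \<and>
              (\<forall>j. j + 5 < length vs \<longrightarrow>
                   col (vs ! (j + 2)) (vs ! j) = col (vs ! (j + 5)) (vs ! (j + 3)))))"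
proof -
  have main: "\<forall>(\<delta>::real) (q::nat) (V::nat set) (T::nat \<Rightarrow> nat \<Rightarrow> bool) (col::nat \<Rightarrow> nat \<Rightarrow> nat).
       \<delta> > 0 \<longrightarrow> q > 0 \<longrightarrow> card V > 0 \<longrightarrow> tournament V T \<longrightarrow>
       delta_far_transitive \<delta> V T \<longrightarrow>
       (\<forall>x y. T x y \<longrightarrow> col x y < q) \<longrightarrow>
       (\<exists>vs. directed_path V T vs \<and>
              real (length vs) \<ge> 1/216 * \<delta>^2 * real (card V) / real q ^ 3 \<and>
              card {col (vs ! j) (vs ! (j + 1)) | j. j + 1 < length vs} \<le> 3) \<and>
       (\<exists>vs. distinct vs \<and> set vs \<subseteq> V \<and>
              real (length vs) \<ge> 1/216 * \<delta>^2 * real (card V) / real q ^ 3 \<and>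
              (\<forall>j. j + 1 < length vs \<longrightarrow> T (vs ! j) (vs ! (j + 1))) \<and>
              (\<forall>j. j + 2 < length vs \<longrightarrow> T (vs ! (j + 2)) (vs ! j)) \<and>
              (\<forall>j. j + 4 < length vs \<longrightarrow>
                   col (vs ! j) (vs ! (j + 1)) = col (vs ! (j + 3)) (vs ! (j + 4))) \<and>
              (\<forall>j. j + 5 < length vs \<longrightarrow>
                   col (vs ! (j + 2)) (vs ! j) = col (vs ! (j + 5)) (vs ! (j + 3))))"
  proof (intro allI impI)
    fix \<delta> :: real and q :: nat and V :: "nat set" and T :: "nat \<Rightarrow> nat \<Rightarrow> bool" and col :: "nat \<Rightarrow> nat \<Rightarrow> nat"
    assume a1: "\<delta> > 0" and a2: "q > 0" and a3: "card V > 0" and a4: "tournament V T"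
      and a5: "delta_far_transitive \<delta> V T" and a6: "\<forall>x y. T x y \<longrightarrow> col x y < q"
    obtain vs c p0 where v1: "distinct vs" and v2: "set vs \<subseteq> V"
      and v3: "real (length vs) \<ge> 1/216 * \<delta>^2 * real (card V) / real q ^ 3"
      and v4: "\<forall>j. j + 1 < length vs \<longrightarrow> T (vs ! j) (vs ! (j+1)) \<and> col (vs ! j) (vs ! (j+1)) = cf c ((p0 + j) mod 3)"
      and v5: "\<forall>j. j + 2 < length vs \<longrightarrow> T (vs ! (j+2)) (vs ! j) \<and> col (vs ! (j+2)) (vs ! j) = cf c ((p0 + j + 2) mod 3)"
      using main_path[OF a1 a2 a3 a4 a5 a6] by blast
    have dp: "directed_path V T vs" unfolding directed_path_def using v1 v2 v4 by blast
    have sub: "{col (vs ! j) (vs ! (j + 1)) | j. j + 1 < length vs} \<subseteq> {cf c 0, cf c 1, cf c 2}"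
    proof
      fix x assume "x \<in> {col (vs ! j) (vs ! (j + 1)) | j. j + 1 < length vs}"
      then obtain j where j: "j + 1 < length vs" "x = col (vs ! j) (vs ! (j + 1))" by blast
      hence x: "x = cf c ((p0 + j) mod 3)" using v4 by blast
      have "(p0 + j) mod 3 < 3" by simp
      hence "(p0 + j) mod 3 = 0 \<or> (p0 + j) mod 3 = 1 \<or> (p0 + j) mod 3 = 2" by linarith
      thus "x \<in> {cf c 0, cf c 1, cf c 2}" using x by auto
    qed
    have c3: "card {cf c 0, cf c 1, cf c 2} \<le> 3" by (simp add: card_insert_if)
    have cc: "card {col (vs ! j) (vs ! (j + 1)) | j. j + 1 < length vs} \<le> 3"
      using card_mono[OF _ sub] c3 by (meson finite.emptyI finite.insertI le_trans)
    have per1: "\<forall>j. j + 4 < length vs \<longrightarrow> col (vs ! j) (vs ! (j + 1)) = col (vs ! (j + 3)) (vs ! (j + 4))"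
    proof (intro allI impI)
      fix j assume j: "j + 4 < length vs"
      have h1: "j + 1 < length vs" and h2: "(j + 3) + 1 < length vs" using j by simp_all
      have A: "col (vs ! j) (vs ! (j + 1)) = cf c ((p0 + j) mod 3)" using v4 h1 by blast
      have B: "col (vs ! (j + 3)) (vs ! ((j + 3) + 1)) = cf c ((p0 + (j + 3)) mod 3)" using v4 h2 by blast
      have e1: "(j + 3) + 1 = j + 4" by simp
      have e2: "p0 + (j + 3) = (p0 + j) + 3" by simp
      have e3: "(p0 + (j + 3)) mod 3 = (p0 + j) mod 3" by (simp only: e2 mod_add_self2)
      show "col (vs ! j) (vs ! (j + 1)) = col (vs ! (j + 3)) (vs ! (j + 4))"
        using A B unfolding e1 e3 by simp
    qed
    have per2: "\<forall>j. j + 5 < length vs \<longrightarrow> col (vs ! (j + 2)) (vs ! j) = col (vs ! (j + 5)) (vs ! (j + 3))"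
    proof (intro allI impI)
      fix j assume j: "j + 5 < length vs"
      have h1: "j + 2 < length vs" and h2: "(j + 3) + 2 < length vs" using j by simp_all
      have A: "col (vs ! (j + 2)) (vs ! j) = cf c ((p0 + j + 2) mod 3)" using v5 h1 by blast
      have B: "col (vs ! ((j + 3) + 2)) (vs ! (j + 3)) = cf c ((p0 + (j + 3) + 2) mod 3)" using v5 h2 by blast
      have e1: "(j + 3) + 2 = j + 5" by simp
      have e2: "p0 + (j + 3) + 2 = (p0 + j + 2) + 3" by simp
      have e3: "(p0 + (j + 3) + 2) mod 3 = (p0 + j + 2) mod 3" by (simp only: e2 mod_add_self2)
      show "col (vs ! (j + 2)) (vs ! j) = col (vs ! (j + 5)) (vs ! (j + 3))"
        using A B unfolding e1 e3 by simp
    qed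
    have fw: "\<forall>j. j + 1 < length vs \<longrightarrow> T (vs ! j) (vs ! (j + 1))" using v4 by blast
    have bw: "\<forall>j. j + 2 < length vs \<longrightarrow> T (vs ! (j + 2)) (vs ! j)" using v5 by blast
    show "(\<exists>vs. directed_path V T vs \<and>
              real (length vs) \<ge> 1/216 * \<delta>^2 * real (card V) / real q ^ 3 \<and>
              card {col (vs ! j) (vs ! (j + 1)) | j. j + 1 < length vs} \<le> 3) \<and>
       (\<exists>vs. distinct vs \<and> set vs \<subseteq> V \<and>
              real (length vs) \<ge> 1/216 * \<delta>^2 * real (card V) / real q ^ 3 \<and>
              (\<forall>j. j + 1 < length vs \<longrightarrow> T (vs ! j) (vs ! (j + 1))) \<and>
              (\<forall>j. j + 2 < length vs \<longrightarrow> T (vs ! (j + 2)) (vs ! j)) \<and>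
              (\<forall>j. j + 4 < length vs \<longrightarrow>
                   col (vs ! j) (vs ! (j + 1)) = col (vs ! (j + 3)) (vs ! (j + 4))) \<and>
              (\<forall>j. j + 5 < length vs \<longrightarrow>
                   col (vs ! (j + 2)) (vs ! j) = col (vs ! (j + 5)) (vs ! (j + 3))))"
      using dp v1 v2 v3 cc fw bw per1 per2 by blast
  qed
  show ?thesis
    apply (rule exI[of _ "1/216"])
    apply (rule conjI)
     apply simp
    apply (rule main)
    done
qed

end
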